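(* Let $(x_n)$ be a bounded sequence in a Banach space $X$ with $c_J(x_n)>0$. Then there is a block sequence $(z_l)$ of $(x_n)$ such that $\|z_l\|\to c_J(x_n)$ as $l\to\infty$ and $$(1-2^{-m})\,c_J(x_n)\sum_{l=m}^\infty|\alpha_l|\le\Big\|\sum_{l=m}^\infty\alpha_l z_l\Big\|\le(1+2^{-m})\,c_J(x_n)\sum_{l=m}^\infty|\alpha_l|$$ for all $m\in\mathbb N$ and all $(\alpha_l)\in\ell^1$.
   Context: For a bounded sequence $(x_n)$ in a Banach space, define $c_m=\inf\{\|\sum_{n\ge m}\alpha_n x_n\|: \sum_{n\ge m}|\alpha_n|=1\}$. This is an increasing sequence in $m$; put $c_J(x_n)=\sup_m c_m$. A sequence $(z_l)$ is a block sequence of $(x_n)$ if there are finite sets $A_l\subset\mathbb N$ with $\max A_l<\min A_{l+1}$ and scalars $(\lambda_k)$ such that, for every $l$, $\sum_{k\in A_l}|\lambda_k|=1$ and $z_l=\sum_{k\in A_l}\lambda_k x_k$. *)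

theory Defs
  imports "HOL-Analysis.Analysis"
begin

definition cseq :: "(nat \<Rightarrow> 'a::banach) \<Rightarrow> nat \<Rightarrow> real" where
  "cseq x m = Inf {norm (\<Sum>n. a n *\<^sub>R x n) | a.
       (\<forall>n<m. a n = 0) \<and> summable (\<lambda>n. \<bar>a n\<bar>) \<and> (\<Sum>n. \<bar>a n\<bar>) = 1}"

definition cJ :: "(nat \<Rightarrow> 'a::banach) \<Rightarrow> real" where
  "cJ x = (SUP m. cseq x m)"

definition block_seq :: "(nat \<Rightarrow> 'a::banach) \<Rightarrow> (nat \<Rightarrow> 'a) \<Rightarrow> bool" where
  "block_seq z x \<longleftrightarrow> (\<exists>(A :: nat \<Rightarrow> nat set) (lam :: nat \<Rightarrow> real).
      (\<forall>l. finite (A l) \<and> A l \<noteq> {}) \<and>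
      (\<forall>l. Max (A l) < Min (A (Suc l))) \<and>
      (\<forall>l. (\<Sum>k\<in>A l. \<bar>lam k\<bar>) = 1) \<and>
      (\<forall>l. z l = (\<Sum>k\<in>A l. lam k *\<^sub>R x k)))"

end

theory Submission imports Defs begin

lemma cseq_set_bdd: "bdd_below {norm (\<Sum>n. a n *\<^sub>R x n) | a.
       (\<forall>n<m. a n = 0) \<and> summable (\<lambda>n. \<bar>a n\<bar>) \<and> (\<Sum>n. \<bar>a n\<bar>) = 1}"
  by (rule bdd_belowI[of _ 0]) auto

lemma cseq_set_ne: "{norm (\<Sum>n. a n *\<^sub>R (x::nat\<Rightarrow>'a::banach) n) | a.
       (\<forall>n<m. a n = 0) \<and> summable (\<lambda>n. \<bar>a n\<bar>) \<and> (\<Sum>n. \<bar>a n\<bar>) = 1} \<noteq> {}"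
proof -
  define a where "a = (\<lambda>n. if n = m then (1::real) else 0)"
  have s: "(\<lambda>n. \<bar>a n\<bar>) sums 1" using sums_single[of m "\<lambda>_. (1::real)"]
    by (simp add: a_def if_distrib cong: if_cong)
  have "(\<forall>n<m. a n = 0) \<and> summable (\<lambda>n. \<bar>a n\<bar>) \<and> (\<Sum>n. \<bar>a n\<bar>) = 1"
    using s by (auto simp: a_def sums_iff)
  then show ?thesis by blast
qed

lemma cseq_mono:
  fixes x :: "nat \<Rightarrow> 'a::banach"
  assumes "m \<le> m'" shows "cseq x m \<le> cseq x m'"
  unfolding cseq_def
  apply (rule cInf_superset_mono[OF cseq_set_ne cseq_set_bdd])
  using assms by auto

lemma cseq_le_fin:
  fixes x :: "nat \<Rightarrow> 'a::banach"
  assumes "finite F" "\<forall>k\<in>F. N \<le> k"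
  shows "cseq x N * (\<Sum>k\<in>F. \<bar>\<beta> k\<bar>) \<le> norm (\<Sum>k\<in>F. \<beta> k *\<^sub>R x k)"
proof (cases "(\<Sum>k\<in>F. \<bar>\<beta> k\<bar>) = 0")
  case True then show ?thesis by simp
next
  case False
  define S where "S = (\<Sum>k\<in>F. \<bar>\<beta> k\<bar>)"
  have Sp: "S > 0" using False S_def by (metis sum_abs_ge_zero order_le_less)
  define a where "a k = (if k \<in> F then \<beta> k / S else 0)" for k
  have s1: "(\<lambda>n. \<bar>a n\<bar>) sums (\<Sum>n\<in>F. \<bar>a n\<bar>)"
    by (rule sums_finite) (auto simp: assms a_def)
  have e1: "(\<Sum>n\<in>F. \<bar>a n\<bar>) = 1"
    using Sp by (simp add: a_def abs_divide sum_divide_distrib[symmetric] S_def)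
  have s2: "(\<lambda>n. a n *\<^sub>R x n) sums (\<Sum>n\<in>F. a n *\<^sub>R x n)"
    by (rule sums_finite) (auto simp: assms a_def)
  have e2: "(\<Sum>n\<in>F. a n *\<^sub>R x n) = (1/S) *\<^sub>R (\<Sum>k\<in>F. \<beta> k *\<^sub>R x k)"
    by (simp add: a_def scaleR_sum_right)
  have mem: "norm (\<Sum>n. a n *\<^sub>R x n) \<in> {norm (\<Sum>n. a n *\<^sub>R x n) | a.
       (\<forall>n<N. a n = 0) \<and> summable (\<lambda>n. \<bar>a n\<bar>) \<and> (\<Sum>n. \<bar>a n\<bar>) = 1}"
  proof -
    have "(\<forall>n<N. a n = 0) \<and> summable (\<lambda>n. \<bar>a n\<bar>) \<and> (\<Sum>n. \<bar>a n\<bar>) = 1"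
      using s1 e1 assms(2) by (auto simp: a_def sums_iff not_le)
    then show ?thesis by blast
  qed
  have "cseq x N \<le> norm (\<Sum>n. a n *\<^sub>R x n)"
    unfolding cseq_def by (rule cInf_lower[OF mem cseq_set_bdd])
  also have "\<dots> = norm (\<Sum>k\<in>F. \<beta> k *\<^sub>R x k) / S"
    using s2 e2 Sp by (simp add: sums_iff)
  finally show ?thesis using Sp by (simp add: S_def field_simps)
qed

lemma cseq_le_bound:
  fixes x :: "nat \<Rightarrow> 'a::banach"
  assumes "\<forall>n. norm (x n) \<le> B"
  shows "cseq x m \<le> B"
proof -
  have "cseq x m * (\<Sum>k\<in>{m}. \<bar>1\<bar>) \<le> norm (\<Sum>k\<in>{m}. 1 *\<^sub>R x k)"
    by (rule cseq_le_fin) auto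
  then show ?thesis using assms[rule_format, of m] by simp
qed


lemma approx:
  fixes x :: "nat \<Rightarrow> 'a::banach"
  assumes B: "\<forall>n. norm (x n) \<le> B" and le: "cseq x N < r"
  shows "\<exists>t lam. t > N \<and> t \<ge> K \<and> (\<Sum>k\<in>{N..<t}. \<bar>lam k\<bar>) = 1 \<and>
           norm (\<Sum>k\<in>{N..<t}. lam k *\<^sub>R x k) < r"
proof -
  obtain v where vmem: "v \<in> {norm (\<Sum>n. a n *\<^sub>R x n) | a.
       (\<forall>n<N. a n = 0) \<and> summable (\<lambda>n. \<bar>a n\<bar>) \<and> (\<Sum>n. \<bar>a n\<bar>) = 1}" and "v < r"
    using cInf_lessD[OF cseq_set_ne, of x N r] le unfolding cseq_def by blast
  then obtain a where a0: "\<forall>n<N. a n = 0" and sa: "summable (\<lambda>n. \<bar>a n\<bar>)"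
    and a1: "(\<Sum>n. \<bar>a n\<bar>) = 1" and ar: "norm (\<Sum>n. a n *\<^sub>R x n) < r" by auto
  have sx: "summable (\<lambda>n. a n *\<^sub>R x n)"
  proof (rule summable_comparison_test)
    show "\<exists>M. \<forall>n\<ge>M. norm (a n *\<^sub>R x n) \<le> \<bar>a n\<bar> * B"
      using B by (auto intro!: mult_left_mono)
    show "summable (\<lambda>n. \<bar>a n\<bar> * B)" using sa by (rule summable_mult2)
  qed
  define P where "P M = (\<Sum>k<M. a k *\<^sub>R x k)" for M
  define T where "T M = (\<Sum>k<M. \<bar>a k\<bar>)" for M
  have tP: "P \<longlonglongrightarrow> (\<Sum>n. a n *\<^sub>R x n)" unfolding P_def using sx by (rule summable_LIMSEQ)
  have tT: "T \<longlonglongrightarrow> 1" unfolding T_def using sa a1 summable_LIMSEQ by fastforce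
  have "(\<lambda>M. norm (P M) / T M) \<longlonglongrightarrow> norm (\<Sum>n. a n *\<^sub>R x n) / 1"
    by (intro tendsto_divide tendsto_norm tP tT) auto
  then have ev1: "eventually (\<lambda>M. norm (P M) / T M < r) sequentially"
    using ar by (auto dest: order_tendstoD)
  have ev2: "eventually (\<lambda>M. T M > 0) sequentially"
    using order_tendstoD(1)[OF tT, of 0] by simp
  have "eventually (\<lambda>M. norm (P M) / T M < r \<and> T M > 0 \<and> M \<ge> Suc N \<and> M \<ge> K) sequentially"
    using ev1 ev2 eventually_ge_at_top[of "Suc N"] eventually_ge_at_top[of K]
    by eventually_elim auto
  then obtain M where M: "norm (P M) / T M < r" "T M > 0" "M \<ge> Suc N" "M \<ge> K"
    unfolding eventually_sequentially by blast
  have split: "(\<Sum>k<M. f k) = (\<Sum>k\<in>{N..<M}. f k)" if "\<forall>k<N. f k = 0" for f :: "nat \<Rightarrow> 'b::comm_monoid_add"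
    by (rule sum.mono_neutral_right) (use that in auto)
  define lam where "lam k = a k / T M" for k
  have "(\<Sum>k\<in>{N..<M}. \<bar>lam k\<bar>) = T M / T M"
    unfolding lam_def T_def using M(2) split[of "\<lambda>k. \<bar>a k\<bar>"] a0
    by (simp add: abs_divide sum_divide_distrib[symmetric] T_def)
  then have l1: "(\<Sum>k\<in>{N..<M}. \<bar>lam k\<bar>) = 1" using M(2) by simp
  have "(\<Sum>k\<in>{N..<M}. lam k *\<^sub>R x k) = (1 / T M) *\<^sub>R P M"
    unfolding lam_def P_def using split[of "\<lambda>k. a k *\<^sub>R x k"] a0
    by (simp add: scaleR_sum_right)
  then have "norm (\<Sum>k\<in>{N..<M}. lam k *\<^sub>R x k) = norm (P M) / T M" using M(2) by simp
  then show ?thesis using M l1 by (intro exI[of _ M] exI[of _ lam]) simp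
qed


theorem lemma5p2:
  fixes x :: "nat \<Rightarrow> 'a::banach"
  assumes "bounded (range x)" and "cJ x > 0"
  shows "\<exists>z. block_seq z x \<and> (\<lambda>l. norm (z l)) \<longlonglongrightarrow> cJ x \<and>
    (\<forall>m (a :: nat \<Rightarrow> real). summable (\<lambda>l. \<bar>a l\<bar>) \<longrightarrow>
       (1 - 2 powi (- int (m + 1))) * cJ x * (\<Sum>l. \<bar>a (l + m)\<bar>)
         \<le> norm (\<Sum>l. a (l + m) *\<^sub>R z (l + m)) \<and>
       norm (\<Sum>l. a (l + m) *\<^sub>R z (l + m))
         \<le> (1 + 2 powi (- int (m + 1))) * cJ x * (\<Sum>l. \<bar>a (l + m)\<bar>))"
proof -
  obtain B where B: "\<forall>n. norm (x n) \<le> B"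
    using assms(1) unfolding bounded_iff by auto
  define c where "c = cJ x"
  have cpos: "c > 0" using assms(2) c_def by simp
  have bdd: "bdd_above (range (cseq x))"
    using cseq_le_bound[OF B] by (intro bdd_aboveI[of _ B]) auto
  have cle: "cseq x m \<le> c" for m
    unfolding c_def cJ_def by (rule cSUP_upper[OF _ bdd]) simp
  define e where "e l = (2::real) powi (- int (l+1))" for l
  have e_eq: "e l = (1/2) ^ Suc l" for l
  proof -
    have "e l = inverse ((2::real) powi int (l+1))" unfolding e_def by (rule power_int_minus)
    also have "(2::real) powi int (l+1) = 2 ^ (l+1)" by (rule power_int_of_nat)
    finally show ?thesis by (simp add: power_one_over inverse_eq_divide)
  qed
  have epos: "e l > 0" for l by (simp add: e_eq)
  have elt: "e l < 1" for l
    unfolding e_eq by (rule power_Suc_less_one) auto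
  have emono: "e (l + m) \<le> e m" for l m
    unfolding e_eq by (rule power_decreasing) auto
  have elim: "e \<longlonglongrightarrow> 0"
    unfolding e_eq by (rule LIMSEQ_power_zero[THEN LIMSEQ_Suc]) simp
  have "\<forall>l. \<exists>n. (1 - e l) * c < cseq x n"
  proof
    fix l
    have "(1 - e l) * c < c" using epos[of l] cpos by simp
    then show "\<exists>n. (1 - e l) * c < cseq x n"
      using less_cSUP_iff[of UNIV "cseq x", OF _ bdd] unfolding c_def cJ_def by auto
  qed
  then have "\<exists>Nf. \<forall>l. (1 - e l) * c < cseq x (Nf l)" by (rule choice)
  then obtain Nf where Nf: "\<forall>l. (1 - e l) * c < cseq x (Nf l)" by blast
  define Q where "Q l s q \<longleftrightarrow> fst q > s \<and> fst q \<ge> Nf (Suc l) \<and>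
       (\<Sum>k\<in>{s..<fst q}. \<bar>snd q k\<bar>) = 1 \<and>
       norm (\<Sum>k\<in>{s..<fst q}. snd q k *\<^sub>R x k) < c + e l * c" for l s and q :: "nat \<times> (nat \<Rightarrow> real)"
  have exq: "\<exists>q. Q l s q" for l s
  proof -
    have "cseq x s < c + e l * c" using cle[of s] mult_pos_pos[OF epos[of l] cpos] by linarith
    then obtain t lam where "t > s \<and> t \<ge> Nf (Suc l) \<and> (\<Sum>k\<in>{s..<t}. \<bar>lam k\<bar>) = 1 \<and>
           norm (\<Sum>k\<in>{s..<t}. lam k *\<^sub>R x k) < c + e l * c"
      using approx[OF B] by blast
    then have "Q l s (t, lam)" by (simp add: Q_def)
    then show ?thesis by blast
  qed
  define Tf where "Tf l s = fst (SOME q. Q l s q)" for l s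
  define Lf where "Lf l s = snd (SOME q. Q l s q)" for l s
  have TL: "\<forall>l s. Tf l s > s \<and> Tf l s \<ge> Nf (Suc l) \<and>
       (\<Sum>k\<in>{s..<Tf l s}. \<bar>Lf l s k\<bar>) = 1 \<and>
       norm (\<Sum>k\<in>{s..<Tf l s}. Lf l s k *\<^sub>R x k) < c + e l * c"
  proof (intro allI)
    fix l s
    have "Q l s (SOME q. Q l s q)" by (rule someI_ex[OF exq])
    then show "Tf l s > s \<and> Tf l s \<ge> Nf (Suc l) \<and>
       (\<Sum>k\<in>{s..<Tf l s}. \<bar>Lf l s k\<bar>) = 1 \<and>
       norm (\<Sum>k\<in>{s..<Tf l s}. Lf l s k *\<^sub>R x k) < c + e l * c"
      unfolding Q_def Tf_def Lf_def by blast
  qed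
  define p where "p = rec_nat (Nf 0) (\<lambda>l s. Tf l s)"
  have p0: "p 0 = Nf 0" and pS: "p (Suc l) = Tf l (p l)" for l by (simp_all add: p_def)
  have pN: "Nf l \<le> p l" for l
    by (cases l) (use TL in \<open>auto simp: p0 pS\<close>)
  have pinc: "p l < p (Suc l)" for l using TL pS by auto
  have smp: "strict_mono p" using pinc by (simp add: strict_mono_Suc_iff)
  have pmono: "l \<le> l' \<Longrightarrow> p l \<le> p l'" for l l' using smp strict_mono_less_eq by blast
  define own where "own k = (LEAST l. k < p (Suc l))" for k
  have own_eq: "own k = l" if "p l \<le> k" "k < p (Suc l)" for k l
    unfolding own_def
  proof (rule Least_equality)
    show "k < p (Suc l)" by fact
    fix y assume "k < p (Suc y)"
    then show "l \<le> y" using that pmono[of "Suc y" l] by (cases "l \<le> y") auto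
  qed
  define G where "G k = Lf (own k) (p (own k)) k" for k
  define A where "A l = {p l..<p (Suc l)}" for l
  define z where "z l = (\<Sum>k\<in>A l. G k *\<^sub>R x k)" for l
  have GL: "G k = Lf l (p l) k" if "k \<in> A l" for k l
    using own_eq that by (auto simp: G_def A_def)
  have zL: "z l = (\<Sum>k\<in>A l. Lf l (p l) k *\<^sub>R x k)" for l
    unfolding z_def by (rule sum.cong) (auto simp: GL)
  have G1: "(\<Sum>k\<in>A l. \<bar>G k\<bar>) = 1" for l
  proof -
    have "(\<Sum>k\<in>A l. \<bar>G k\<bar>) = (\<Sum>k\<in>A l. \<bar>Lf l (p l) k\<bar>)"
      by (rule sum.cong) (auto simp: GL)
    then show ?thesis using TL by (simp add: A_def pS)
  qed
  have blk: "block_seq z x"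
    unfolding block_seq_def
  proof (intro exI[of _ A] exI[of _ G] conjI allI)
    fix l
    show "finite (A l)" by (simp add: A_def)
    show "A l \<noteq> {}" using pinc[of l] by (simp add: A_def)
    have "Max (A l) = p (Suc l) - 1" using pinc[of l] unfolding A_def
      by (intro Max_eqI) auto
    moreover have "Min (A (Suc l)) = p (Suc l)" using pinc[of "Suc l"] unfolding A_def
      by (intro Min_eqI) auto
    ultimately show "Max (A l) < Min (A (Suc l))" using pinc[of l] by simp
    show "(\<Sum>k\<in>A l. \<bar>G k\<bar>) = 1" by (rule G1)
    show "z l = (\<Sum>k\<in>A l. G k *\<^sub>R x k)" by (rule z_def)
  qed
  have zup: "norm (z l) \<le> (1 + e l) * c" for l
  proof -
    have "norm (z l) < c + e l * c" using TL zL[of l] by (simp add: A_def pS)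
    then show ?thesis by (simp add: algebra_simps)
  qed
  have cp: "(1 - e l) * c \<le> cseq x (p l)" for l
    using Nf cseq_mono[OF pN[of l], of x] by (meson less_imp_le order_trans)
  have zlow: "(1 - e l) * c \<le> norm (z l)" for l
  proof -
    have "cseq x (p l) * (\<Sum>k\<in>A l. \<bar>G k\<bar>) \<le> norm (z l)"
      unfolding z_def by (rule cseq_le_fin) (auto simp: A_def)
    then show ?thesis using cp[of l] G1[of l] by simp
  qed
  have lim: "(\<lambda>l. norm (z l)) \<longlonglongrightarrow> c"
  proof (rule tendsto_sandwich)
    show "\<forall>\<^sub>F l in sequentially. (1 - e l) * c \<le> norm (z l)" using zlow by simp
    show "\<forall>\<^sub>F l in sequentially. norm (z l) \<le> (1 + e l) * c" using zup by simp
    show "(\<lambda>l. (1 - e l) * c) \<longlonglongrightarrow> c"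
      using tendsto_mult[OF tendsto_diff[OF tendsto_const elim] tendsto_const, of 1 c] by simp
    show "(\<lambda>l. (1 + e l) * c) \<longlonglongrightarrow> c"
      using tendsto_mult[OF tendsto_add[OF tendsto_const elim] tendsto_const, of 1 c] by simp
  qed
  have zb: "norm (z l) \<le> 2 * c" for l
  proof -
    have "(1 + e l) * c \<le> 2 * c" using elt[of l] cpos by (intro mult_right_mono) auto
    then show ?thesis using zup[of l] by linarith
  qed
  have main: "(1 - e m) * c * (\<Sum>l. \<bar>a (l + m)\<bar>) \<le> norm (\<Sum>l. a (l + m) *\<^sub>R z (l + m)) \<and>
       norm (\<Sum>l. a (l + m) *\<^sub>R z (l + m)) \<le> (1 + e m) * c * (\<Sum>l. \<bar>a (l + m)\<bar>)"
    if sa: "summable (\<lambda>l. \<bar>a l\<bar>)" for m and a :: "nat \<Rightarrow> real"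
  proof
    have sa': "summable (\<lambda>l. \<bar>a (l + m)\<bar>)" using sa by (rule summable_ignore_initial_segment)
    have nz: "norm (a (l + m) *\<^sub>R z (l + m)) \<le> \<bar>a (l + m)\<bar> * ((1 + e m) * c)" for l
    proof -
      have "norm (z (l+m)) \<le> (1 + e m) * c"
      proof -
        have "(1 + e (l+m)) * c \<le> (1 + e m) * c" using emono[of l m] cpos by (intro mult_right_mono) auto
        then show ?thesis using zup[of "l+m"] by linarith
      qed
      then show ?thesis by (simp add: mult_left_mono)
    qed
    have "norm (\<Sum>l. a (l + m) *\<^sub>R z (l + m)) \<le> (\<Sum>l. \<bar>a (l + m)\<bar> * ((1 + e m) * c))"
      by (rule norm_suminf_le[OF nz]) (rule summable_mult2[OF sa'])
    also have "\<dots> = (1 + e m) * c * (\<Sum>l. \<bar>a (l + m)\<bar>)"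
      using suminf_mult2[OF sa', of "(1 + e m) * c"] by (simp add: mult.commute)
    finally show "norm (\<Sum>l. a (l + m) *\<^sub>R z (l + m)) \<le> (1 + e m) * c * (\<Sum>l. \<bar>a (l + m)\<bar>)" .
    have sz: "summable (\<lambda>l. a (l + m) *\<^sub>R z (l + m))"
    proof (rule summable_comparison_test)
      show "\<exists>M. \<forall>n\<ge>M. norm (a (n + m) *\<^sub>R z (n + m)) \<le> \<bar>a (n + m)\<bar> * (2 * c)"
        using zb by (auto intro!: mult_left_mono)
      show "summable (\<lambda>n. \<bar>a (n + m)\<bar> * (2 * c))" using sa' by (rule summable_mult2)
    qed
    have I1: "(\<Sum>l<n. a (l + m) *\<^sub>R z (l + m)) = (\<Sum>k\<in>{p m..<p (m + n)}. (a (own k) * G k) *\<^sub>R x k)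
       \<and> (\<Sum>l<n. \<bar>a (l + m)\<bar>) = (\<Sum>k\<in>{p m..<p (m + n)}. \<bar>a (own k) * G k\<bar>)" for n
    proof (induction n)
      case 0 then show ?case by simp
    next
      case (Suc n)
      have c1: "(\<Sum>k\<in>{p m..<p (m + n)}. f k) + (\<Sum>k\<in>{p (m+n)..<p (Suc (m + n))}. f k)
          = (\<Sum>k\<in>{p m..<p (m + Suc n)}. f k)" for f :: "nat \<Rightarrow> 'b::comm_monoid_add"
        using sum.atLeastLessThan_concat[of "p m" "p (m+n)" "p (Suc (m+n))" f] pmono[of m "m+n"]
          pinc[of "m+n"] by simp
      have b1: "(\<Sum>k\<in>{p (m+n)..<p (Suc (m + n))}. (a (own k) * G k) *\<^sub>R x k) = a (n + m) *\<^sub>R z (n + m)"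
      proof -
        have "(\<Sum>k\<in>{p (m+n)..<p (Suc (m + n))}. (a (own k) * G k) *\<^sub>R x k)
            = (\<Sum>k\<in>A (m+n). a (m + n) *\<^sub>R (G k *\<^sub>R x k))"
          by (rule sum.cong) (auto simp: A_def own_eq)
        then show ?thesis by (simp add: z_def scaleR_sum_right add.commute)
      qed
      have b2: "(\<Sum>k\<in>{p (m+n)..<p (Suc (m + n))}. \<bar>a (own k) * G k\<bar>) = \<bar>a (n + m)\<bar>"
      proof -
        have "(\<Sum>k\<in>{p (m+n)..<p (Suc (m + n))}. \<bar>a (own k) * G k\<bar>)
            = (\<Sum>k\<in>A (m+n). \<bar>a (m + n)\<bar> * \<bar>G k\<bar>)"
          by (rule sum.cong) (auto simp: A_def own_eq abs_mult)
        then show ?thesis using G1[of "m+n"] by (simp add: sum_distrib_left[symmetric] add.commute)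
      qed
      show ?case using Suc c1[of "\<lambda>k. (a (own k) * G k) *\<^sub>R x k"] c1[of "\<lambda>k. \<bar>a (own k) * G k\<bar>"] b1 b2
        by simp
    qed
    have fin: "cseq x (p m) * (\<Sum>l<n. \<bar>a (l + m)\<bar>) \<le> norm (\<Sum>l<n. a (l + m) *\<^sub>R z (l + m))" for n
      using I1[of n] cseq_le_fin[of "{p m..<p (m + n)}" "p m" x "\<lambda>k. a (own k) * G k"] by simp
    have "cseq x (p m) * (\<Sum>l. \<bar>a (l + m)\<bar>) \<le> norm (\<Sum>l. a (l + m) *\<^sub>R z (l + m))"
    proof (rule LIMSEQ_le)
      show "(\<lambda>n. cseq x (p m) * (\<Sum>l<n. \<bar>a (l + m)\<bar>)) \<longlonglongrightarrow> cseq x (p m) * (\<Sum>l. \<bar>a (l + m)\<bar>)"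
        by (intro tendsto_mult tendsto_const summable_LIMSEQ sa')
      show "(\<lambda>n. norm (\<Sum>l<n. a (l + m) *\<^sub>R z (l + m))) \<longlonglongrightarrow> norm (\<Sum>l. a (l + m) *\<^sub>R z (l + m))"
        by (intro tendsto_norm summable_LIMSEQ sz)
      show "\<exists>N. \<forall>n\<ge>N. cseq x (p m) * (\<Sum>l<n. \<bar>a (l + m)\<bar>) \<le> norm (\<Sum>l<n. a (l + m) *\<^sub>R z (l + m))"
        using fin by blast
    qed
    moreover have "(1 - e m) * c * (\<Sum>l. \<bar>a (l + m)\<bar>) \<le> cseq x (p m) * (\<Sum>l. \<bar>a (l + m)\<bar>)"
      by (rule mult_right_mono[OF cp]) (simp add: suminf_nonneg sa')
    ultimately show "(1 - e m) * c * (\<Sum>l. \<bar>a (l + m)\<bar>) \<le> norm (\<Sum>l. a (l + m) *\<^sub>R z (l + m))"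
      by linarith
  qed
  show ?thesis
    using blk lim main unfolding c_def e_def by blast
qed

end
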